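(* Given a bounded word equation $u \,\dot{=}\, v$ with $u,v \in \Xi^*$ and bounds $B:\Gamma\to\mathbb{N}$, the equation automaton $A(u \,\dot{=}\, v,B)$ reaches an accepting state if and only if there exists a substitution $S$ such that $S(u)=S(v)$ (i.e. $S$ is a solution of $u \,\dot{=}\, v$) and $|S(X)| \leq B(X)$ for all $X \in \Gamma$.
   Context: Let $\Xi=\Sigma\cup\Gamma$ with $\Sigma$ a finite set of letters and $\Gamma$ a finite set of variables, $\Sigma\cap\Gamma=\emptyset$. A substitution is a morphism $S:\Xi^*\to\Sigma^*$ fixing letters. A bounded word equation is a word equation $u \,\dot{=}\, v$ together with bounds $b_X=B(X)$ on the lengths of the images of the variables. Each variable $X$ is replaced by a sequence of "filled variables" $X^{(0)}\cdots X^{(b_X-1)}$, each of which is mapped to exactly one symbol of $\Sigma_\lambda=\Sigma\cup\{\lambda\}$, where the fresh symbol $\lambda$ is a placeholder for the empty word (marking unused positions at the end of a variable). Write $\hat u,\hat v$ for the resulting filled patterns over $\Sigma\cup\hat\Gamma$ ($\hat\Gamma$ the set of filled variables). For a partial filled substitution $\hat S$, two symbols $a,b$ are compatible, $a \sim_{\hat S} b$, iff $\hat S(a)=\hat S(b)$ or one of $\hat S(a),\hat S(b)$ is undefined; $S[X\mapsto b]$ denotes $S\cup\{X\mapsto b\}$ if $S(X)$ is undefined and $S$ otherwise. The equation automaton $A(u \,\dot{=}\, v,B)=(Q,\delta,I,F)$ has states $((i,j),S)$ with $i\in\{0,\dots,|\hat u|\}$, $j\in\{0,\dots,|\hat v|\}$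 and $S$ a partial map from filled symbols to $\Sigma_\lambda$; transitions on input $a\in\Sigma_\lambda$: $\delta(((i,j),S),a)=((i+1,j+1),S[\hat u[i]\mapsto a][\hat v[j]\mapsto a])$ if $\hat u[i]\sim_{\hat S}\hat v[j]\sim_{\hat S} a$; $=((i+1,j),S[\hat u[i]\mapsto\lambda])$ if $\hat u[i]\sim_{\hat S}\lambda=a$; $=((i,j+1),S[\hat v[j]\mapsto\lambda])$ if $\hat v[j]\sim_{\hat S}\lambda=a$ (nondeterministic). Initial state $((0,0),\{a\mapsto a \mid a\in\Sigma_\lambda\})$; final states are all $((|\hat u|,|\hat v|),S)$. *)

theory Defs
  imports Main
begin

text \<open>Symbols of \<open>Xi = Sigma \<union> Gamma\<close>: letters (type 'a = Sigma) and variables (type 'v = Gamma).\<close>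
datatype ('a, 'v) sym = Let 'a | Var 'v

definition subst :: "('v \<Rightarrow> 'a list) \<Rightarrow> ('a, 'v) sym list \<Rightarrow> 'a list" where
  "subst S w = concat (map (\<lambda>x. case x of Let a \<Rightarrow> [a] | Var X \<Rightarrow> S X) w)"

text \<open>Sigma_lambda is 'a option, with None playing the role of lambda.
  Filled symbols: elements of Sigma_lambda, and filled variables X^(k).\<close>
datatype ('a, 'v) fsym = FC "'a option" | FV 'v nat

fun fill :: "('v \<Rightarrow> nat) \<Rightarrow> ('a, 'v) sym \<Rightarrow> ('a, 'v) fsym list" where
  "fill B (Let a) = [FC (Some a)]"
| "fill B (Var X) = map (FV X) [0..<B X]"

definition filled :: "('v \<Rightarrow> nat) \<Rightarrow> ('a, 'v) sym list \<Rightarrow> ('a, 'v) fsym list" where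
  "filled B w = concat (map (fill B) w)"

type_synonym ('a, 'v) fsubst = "('a, 'v) fsym \<Rightarrow> 'a option option"

definition compat :: "('a, 'v) fsubst \<Rightarrow> ('a, 'v) fsym \<Rightarrow> ('a, 'v) fsym \<Rightarrow> bool" where
  "compat S x y \<longleftrightarrow> S x = S y \<or> S x = None \<or> S y = None"

definition upd :: "('a, 'v) fsubst \<Rightarrow> ('a, 'v) fsym \<Rightarrow> 'a option \<Rightarrow> ('a, 'v) fsubst" where
  "upd S x b = (if S x = None then S(x \<mapsto> b) else S)"

type_synonym ('a, 'v) state = "(nat \<times> nat) \<times> ('a, 'v) fsubst"

inductive eq_step :: "('a, 'v) fsym list \<Rightarrow> ('a, 'v) fsym list \<Rightarrow> ('a, 'v) state \<Rightarrow> 'a option \<Rightarrow> ('a, 'v) state \<Rightarrow> bool"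
  for uh vh where
  both: "\<lbrakk> i < length uh; j < length vh;
          compat S (uh ! i) (vh ! j); compat S (vh ! j) (FC a); compat S (uh ! i) (FC a) \<rbrakk>
     \<Longrightarrow> eq_step uh vh ((i, j), S) a ((i + 1, j + 1), upd (upd S (uh ! i) a) (vh ! j) a)"
| left: "\<lbrakk> i < length uh; compat S (uh ! i) (FC None); j \<le> length vh \<rbrakk>
     \<Longrightarrow> eq_step uh vh ((i, j), S) None ((i + 1, j), upd S (uh ! i) None)"
| right: "\<lbrakk> j < length vh; compat S (vh ! j) (FC None); i \<le> length uh \<rbrakk>
     \<Longrightarrow> eq_step uh vh ((i, j), S) None ((i, j + 1), upd S (vh ! j) None)"

definition init_fsubst :: "('a, 'v) fsubst" where
  "init_fsubst x = (case x of FC c \<Rightarrow> Some c | FV _ _ \<Rightarrow> None)"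

definition accepts :: "('a, 'v) sym list \<Rightarrow> ('a, 'v) sym list \<Rightarrow> ('v \<Rightarrow> nat) \<Rightarrow> bool" where
  "accepts u v B \<longleftrightarrow>
     (\<exists>S. (\<lambda>s s'. \<exists>a. eq_step (filled B u) (filled B v) s a s')\<^sup>*\<^sup>*
             ((0, 0), init_fsubst) ((length (filled B u), length (filled B v)), S))"

end

theory Submission
  imports Defs
begin

definition projS :: "('a, 'v) fsubst \<Rightarrow> ('a, 'v) fsym list \<Rightarrow> 'a list" where
  "projS S xs = concat (map (\<lambda>x. case S x of Some (Some c) \<Rightarrow> [c] | _ \<Rightarrow> []) xs)"

definition extS :: "('a, 'v) fsubst \<Rightarrow> ('a, 'v) fsubst \<Rightarrow> bool" where
  "extS S S' \<longleftrightarrow> (\<forall>x. S x \<noteq> None \<longrightarrow> S' x = S x)"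

definition inv :: "('a, 'v) fsym list \<Rightarrow> ('a, 'v) fsym list \<Rightarrow> ('a, 'v) state \<Rightarrow> bool" where
  "inv uh vh s = (case s of ((i, j), S) \<Rightarrow> i \<le> length uh \<and> j \<le> length vh \<and> (\<forall>c. S (FC c) = Some c)
     \<and> (\<forall>k<i. S (uh!k) \<noteq> None) \<and> (\<forall>k<j. S (vh!k) \<noteq> None)
     \<and> projS S (take i uh) = projS S (take j vh))"

lemma extS_upd: "extS S (upd S x b)"
  by (auto simp: extS_def upd_def)

lemma extS_trans: "extS S1 S2 \<Longrightarrow> extS S2 S3 \<Longrightarrow> extS S1 S3"
  by (auto simp: extS_def)

lemma upd_same: "S x = None \<or> S x = Some b \<Longrightarrow> upd S x b x = Some b"
  by (auto simp: upd_def)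

lemma projS_ext: "extS S S' \<Longrightarrow> \<forall>x\<in>set xs. S x \<noteq> None \<Longrightarrow> projS S' xs = projS S xs"
  unfolding projS_def extS_def by (induction xs) auto

lemma projS_app: "projS S (xs @ ys) = projS S xs @ projS S ys"
  by (simp add: projS_def)

lemma set_take_def: "\<forall>k<i. S (xs!k) \<noteq> None \<Longrightarrow> i \<le> length xs \<Longrightarrow> \<forall>x\<in>set (take i xs). S x \<noteq> None"
  by (auto simp: in_set_conv_nth)

lemma take_Suc_nth': "i < length xs \<Longrightarrow> take (Suc i) xs = take i xs @ [xs!i]"
  by (simp add: take_Suc_conv_app_nth)

lemma upd_FC: "(\<forall>c. S (FC c) = Some c) \<Longrightarrow> \<forall>c. upd S x b (FC c) = Some c"
  by (auto simp: upd_def)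

lemma step_inv:
  assumes "eq_step uh vh s a s'" "inv uh vh s"
  shows "inv uh vh s'"
  using assms
proof (cases rule: eq_step.cases)
  case (both i j S)
  let ?x = "uh!i" and ?y = "vh!j"
  let ?S1 = "upd S ?x a"
  let ?S2 = "upd ?S1 ?y a"
  have FC: "\<forall>c. S (FC c) = Some c" using assms(2) both by (simp add: inv_def)
  have e1: "extS S ?S2" using extS_upd extS_trans by blast
  have cx: "S ?x = None \<or> S ?x = Some a" using both FC by (auto simp: compat_def)
  have cy: "S ?y = None \<or> S ?y = Some a" using both FC by (auto simp: compat_def)
  have s1x: "?S1 ?x = Some a" using upd_same cx by metis
  have s1y: "?S1 ?y = None \<or> ?S1 ?y = Some a" using cy s1x by (auto simp: upd_def)
  have s2y: "?S2 ?y = Some a" using upd_same s1y by metis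
  have s2x: "?S2 ?x = Some a" using s1x by (auto simp: upd_def)
  have I: "i \<le> length uh \<and> j \<le> length vh \<and> (\<forall>k<i. S (uh!k) \<noteq> None) \<and> (\<forall>k<j. S (vh!k) \<noteq> None)
     \<and> projS S (take i uh) = projS S (take j vh)" using assms(2) both by (simp add: inv_def)
  have pu: "projS ?S2 (take (Suc i) uh) = projS S (take i uh) @ (case a of Some c \<Rightarrow> [c] | None \<Rightarrow> [])"
    using both(3) I e1 s2x projS_ext[OF e1 set_take_def] by (simp add: take_Suc_nth' projS_app) (auto simp: projS_def split: option.splits)
  have pv: "projS ?S2 (take (Suc j) vh) = projS S (take j vh) @ (case a of Some c \<Rightarrow> [c] | None \<Rightarrow> [])"
    using both(4) I e1 s2y projS_ext[OF e1 set_take_def] by (simp add: take_Suc_nth' projS_app) (auto simp: projS_def split: option.splits)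
  have d: "\<forall>k<Suc i. ?S2 (uh!k) \<noteq> None" using I e1 s2x unfolding extS_def
    by (metis less_Suc_eq option.distinct(1))
  have d2: "\<forall>k<Suc j. ?S2 (vh!k) \<noteq> None" using I e1 s2y unfolding extS_def
    by (metis less_Suc_eq option.distinct(1))
  have "\<forall>c. ?S2 (FC c) = Some c" using upd_FC[OF upd_FC[OF FC]] by blast
  then show ?thesis using both pu pv d d2 I by (simp add: inv_def)
next
  case (left i S j)
  let ?x = "uh!i"
  let ?S2 = "upd S ?x None"
  have FC: "\<forall>c. S (FC c) = Some c" using assms(2) left by (simp add: inv_def)
  have e1: "extS S ?S2" using extS_upd by blast
  have cx: "S ?x = None \<or> S ?x = Some None" using left FC by (auto simp: compat_def)
  have s2x: "?S2 ?x = Some None" using upd_same cx by metis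
  have I: "i \<le> length uh \<and> j \<le> length vh \<and> (\<forall>k<i. S (uh!k) \<noteq> None) \<and> (\<forall>k<j. S (vh!k) \<noteq> None)
     \<and> projS S (take i uh) = projS S (take j vh)" using assms(2) left by (simp add: inv_def)
  have pu: "projS ?S2 (take (Suc i) uh) = projS S (take i uh)"
    using left I e1 s2x projS_ext[OF e1 set_take_def] by (simp add: take_Suc_nth' projS_app) (auto simp: projS_def split: option.splits)
  have pv: "projS ?S2 (take j vh) = projS S (take j vh)"
    using I projS_ext[OF e1 set_take_def] by simp
  have d: "\<forall>k<Suc i. ?S2 (uh!k) \<noteq> None" using I e1 s2x unfolding extS_def
    by (metis less_Suc_eq option.distinct(1))
  have d2: "\<forall>k<j. ?S2 (vh!k) \<noteq> None" using I e1 unfolding extS_def by metis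
  have "\<forall>c. ?S2 (FC c) = Some c" using upd_FC[OF FC] by blast
  then show ?thesis using left pu pv d d2 I by (simp add: inv_def)
next
  case (right j S i)
  let ?x = "vh!j"
  let ?S2 = "upd S ?x None"
  have FC: "\<forall>c. S (FC c) = Some c" using assms(2) right by (simp add: inv_def)
  have e1: "extS S ?S2" using extS_upd by blast
  have cx: "S ?x = None \<or> S ?x = Some None" using right FC by (auto simp: compat_def)
  have s2x: "?S2 ?x = Some None" using upd_same cx by metis
  have I: "i \<le> length uh \<and> j \<le> length vh \<and> (\<forall>k<i. S (uh!k) \<noteq> None) \<and> (\<forall>k<j. S (vh!k) \<noteq> None)
     \<and> projS S (take i uh) = projS S (take j vh)" using assms(2) right by (simp add: inv_def)
  have pu: "projS ?S2 (take (Suc j) vh) = projS S (take j vh)"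
    using right I e1 s2x projS_ext[OF e1 set_take_def] by (simp add: take_Suc_nth' projS_app) (auto simp: projS_def split: option.splits)
  have pv: "projS ?S2 (take i uh) = projS S (take i uh)"
    using I projS_ext[OF e1 set_take_def] by simp
  have d: "\<forall>k<Suc j. ?S2 (vh!k) \<noteq> None" using I e1 s2x unfolding extS_def
    by (metis less_Suc_eq option.distinct(1))
  have d2: "\<forall>k<i. ?S2 (uh!k) \<noteq> None" using I e1 unfolding extS_def by metis
  have "\<forall>c. ?S2 (FC c) = Some c" using upd_FC[OF FC] by blast
  then show ?thesis using right pu pv d d2 I by (simp add: inv_def)
qed

lemma run_inv:
  assumes "(\<lambda>s s'. \<exists>a. eq_step uh vh s a s')\<^sup>*\<^sup>* s0 s" "inv uh vh s0"
  shows "inv uh vh s"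
  using assms by (induction rule: rtranclp_induct) (auto intro: step_inv)

lemma init_inv: "inv uh vh ((0,0), init_fsubst)"
  by (simp add: inv_def init_fsubst_def projS_def)

definition sig :: "('v \<Rightarrow> nat) \<Rightarrow> ('a, 'v) fsubst \<Rightarrow> 'v \<Rightarrow> 'a list" where
  "sig B S X = projS S (map (FV X) [0..<B X])"

lemma projS_filled:
  assumes "\<forall>c. S (FC c) = Some c"
  shows "projS S (filled B u) = subst (sig B S) u"
  using assms by (induction u) (auto simp: filled_def subst_def projS_def sig_def split: sym.splits)

lemma len_projS: "length (projS S xs) \<le> length xs"
  unfolding projS_def by (induction xs) (auto split: option.splits)

lemma soundness:
  assumes "accepts u v B"
  shows "\<exists>S. subst S u = subst S v \<and> (\<forall>X. length (S X) \<le> B X)"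
proof -
  obtain S where r: "(\<lambda>s s'. \<exists>a. eq_step (filled B u) (filled B v) s a s')\<^sup>*\<^sup>*
             ((0, 0), init_fsubst) ((length (filled B u), length (filled B v)), S)"
    using assms by (auto simp: accepts_def)
  have "inv (filled B u) (filled B v) ((length (filled B u), length (filled B v)), S)"
    using run_inv[OF r init_inv] .
  then have FC: "\<forall>c. S (FC c) = Some c" and eq: "projS S (filled B u) = projS S (filled B v)"
    by (auto simp: inv_def)
  show ?thesis
    apply (rule exI[of _ "sig B S"])
    using eq projS_filled[OF FC] len_projS[of S "map (FV _) [0..<B _]"] by (auto simp: sig_def)
qed


definition agr :: "('a, 'v) fsubst \<Rightarrow> (('a, 'v) fsym \<Rightarrow> 'a option) \<Rightarrow> bool" where
  "agr S G \<longleftrightarrow> (\<forall>x. S x \<noteq> None \<longrightarrow> S x = Some (G x))"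

definition projG :: "(('a, 'v) fsym \<Rightarrow> 'a option) \<Rightarrow> ('a, 'v) fsym list \<Rightarrow> 'a list" where
  "projG G xs = concat (map (\<lambda>x. case G x of Some c \<Rightarrow> [c] | None \<Rightarrow> []) xs)"

lemma agr_upd: "agr S G \<Longrightarrow> b = G x \<Longrightarrow> agr (upd S x b) G"
  by (auto simp: agr_def upd_def)

lemma agr_compat: "agr S G \<Longrightarrow> G x = G y \<Longrightarrow> compat S x y"
  unfolding agr_def compat_def by (metis option.distinct(1))

lemma completeness_gen:
  assumes GFC: "\<forall>c. G (FC c) = c"
  shows "\<forall>i j S. n = (length uh - i) + (length vh - j) \<longrightarrow> i \<le> length uh \<longrightarrow> j \<le> length vh \<longrightarrow> agr S G
    \<longrightarrow> projG G (drop i uh) = projG G (drop j vh)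
    \<longrightarrow> (\<exists>S'. (\<lambda>s s'. \<exists>a. eq_step uh vh s a s')\<^sup>*\<^sup>* ((i, j), S) ((length uh, length vh), S'))"
proof (induction n rule: less_induct)
  case (less n)
  show ?case
  proof (intro allI impI)
    fix i j S
    assume n: "n = (length uh - i) + (length vh - j)" and i: "i \<le> length uh" and j: "j \<le> length vh"
      and ag: "agr S G" and pr: "projG G (drop i uh) = projG G (drop j vh)"
    let ?R = "\<lambda>s s'. \<exists>a. eq_step uh vh s a s'"
    have IH: "\<And>i' j' S'. (length uh - i') + (length vh - j') < n \<Longrightarrow> i' \<le> length uh \<Longrightarrow> j' \<le> length vh
      \<Longrightarrow> agr S' G \<Longrightarrow> projG G (drop i' uh) = projG G (drop j' vh)
      \<Longrightarrow> \<exists>S''. ?R\<^sup>*\<^sup>* ((i', j'), S') ((length uh, length vh), S'')"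
      using less.IH by blast
    show "\<exists>S'. ?R\<^sup>*\<^sup>* ((i, j), S) ((length uh, length vh), S')"
    proof (cases "i < length uh \<and> G (uh!i) = None")
      case True
      let ?S = "upd S (uh!i) None"
      have st: "eq_step uh vh ((i, j), S) None ((i + 1, j), ?S)"
        using True j ag GFC by (intro eq_step.left) (auto intro: agr_compat)
      have "\<exists>S'. ?R\<^sup>*\<^sup>* ((i + 1, j), ?S) ((length uh, length vh), S')"
      proof (rule IH)
        show "agr ?S G" by (rule agr_upd[OF ag]) (use True in simp)
        show "projG G (drop (i + 1) uh) = projG G (drop j vh)"
          using pr True by (simp add: Cons_nth_drop_Suc[symmetric] projG_def)
      qed (use n True j in auto)
      then obtain S' where r: "?R\<^sup>*\<^sup>* ((i + 1, j), ?S) ((length uh, length vh), S')" by blast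
          have "?R ((i, j), S) ((i + 1, j), ?S)" using st by blast
          from converse_rtranclp_into_rtranclp[OF this r] show ?thesis by blast
    next
      case F1: False
      show ?thesis
      proof (cases "j < length vh \<and> G (vh!j) = None")
        case True
        let ?S = "upd S (vh!j) None"
        have st: "eq_step uh vh ((i, j), S) None ((i, j + 1), ?S)"
          using True i ag GFC by (intro eq_step.right) (auto intro: agr_compat)
        have "\<exists>S'. ?R\<^sup>*\<^sup>* ((i, j + 1), ?S) ((length uh, length vh), S')"
        proof (rule IH)
          show "agr ?S G" by (rule agr_upd[OF ag]) (use True in simp)
          show "projG G (drop i uh) = projG G (drop (j + 1) vh)"
            using pr True by (simp add: Cons_nth_drop_Suc[symmetric] projG_def)
        qed (use n True i in auto)
        then obtain S' where r: "?R\<^sup>*\<^sup>* ((i, j + 1), ?S) ((length uh, length vh), S')" by blast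
          have "?R ((i, j), S) ((i, j + 1), ?S)" using st by blast
          from converse_rtranclp_into_rtranclp[OF this r] show ?thesis by blast
      next
        case F2: False
        show ?thesis
        proof (cases "i < length uh \<and> j < length vh")
          case True
          obtain a where ga: "G (uh!i) = Some a" using F1 True by auto
          obtain b where gb: "G (vh!j) = Some b" using F2 True by auto
          have pu: "projG G (drop i uh) = a # projG G (drop (Suc i) uh)"
            using True ga by (auto simp: Cons_nth_drop_Suc[symmetric] projG_def)
          have pv: "projG G (drop j vh) = b # projG G (drop (Suc j) vh)"
            using True gb by (auto simp: Cons_nth_drop_Suc[symmetric] projG_def)
          have ab: "a = b" and pr2: "projG G (drop (Suc i) uh) = projG G (drop (Suc j) vh)"
            using pr pu pv by auto
          let ?S = "upd (upd S (uh!i) (Some a)) (vh!j) (Some a)"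
          have st: "eq_step uh vh ((i, j), S) (Some a) ((i + 1, j + 1), ?S)"
            using True ag GFC ga gb ab by (intro eq_step.both) (auto intro: agr_compat)
          have ag2: "agr ?S G" using agr_upd[OF agr_upd[OF ag, of "Some a" "uh!i"], of "Some a" "vh!j"] ga gb ab by simp
          have "\<exists>S'. ?R\<^sup>*\<^sup>* ((i + 1, j + 1), ?S) ((length uh, length vh), S')"
            proof (rule IH[of "i+1" "j+1" ?S])
            show "length uh - (i + 1) + (length vh - (j + 1)) < n" using n True by arith
          qed (use True ag2 pr2 in auto)
          then obtain S' where r: "?R\<^sup>*\<^sup>* ((i + 1, j + 1), ?S) ((length uh, length vh), S')" by blast
          have "?R ((i, j), S) ((i + 1, j + 1), ?S)" using st by blast
          from converse_rtranclp_into_rtranclp[OF this r] show ?thesis by blast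
        next
          case False
          show ?thesis
          proof (cases "i = length uh \<and> j = length vh")
            case True
            then show ?thesis by auto
          next
            case False2: False
            show ?thesis
            proof (cases "i = length uh")
              case True
              then have jj: "j < length vh" using j False2 by auto
              then obtain b where gb: "G (vh!j) = Some b" using F2 by auto
              have "projG G (drop j vh) = b # projG G (drop (Suc j) vh)"
                using jj gb by (auto simp: Cons_nth_drop_Suc[symmetric] projG_def)
              then show ?thesis using pr True by (simp add: projG_def)
            next
              case Fi: False
              then have ii: "i < length uh" using i by auto
              then have jj: "j = length vh" using False j by auto
              obtain b where gb: "G (uh!i) = Some b" using F1 ii by auto
              have "projG G (drop i uh) = b # projG G (drop (Suc i) uh)"
                using ii gb by (auto simp: Cons_nth_drop_Suc[symmetric] projG_def)
              then show ?thesis using pr jj by (simp add: projG_def)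
            qed
          qed
        qed
      qed
    qed
  qed
qed

definition Gof :: "('v \<Rightarrow> 'a list) \<Rightarrow> ('a, 'v) fsym \<Rightarrow> 'a option" where
  "Gof S x = (case x of FC c \<Rightarrow> c | FV X k \<Rightarrow> (if k < length (S X) then Some (S X ! k) else None))"

lemma concat_take_aux: "length xs \<le> n \<Longrightarrow>
  concat (map (\<lambda>k. if k < length xs then [xs!k] else []) [0..<n]) = xs"
proof -
  assume a: "length xs \<le> n"
  have 1: "[0..<n] = [0..<length xs] @ [length xs..<n]" using a upt_add_eq_append[of 0 "length xs" "n - length xs"] by simp
  have 2: "map (\<lambda>k. if k < length xs then [xs!k] else []) [0..<length xs] = map (\<lambda>k. [xs!k]) [0..<length xs]"
    by (rule map_cong) auto
  have 3: "concat (map (\<lambda>k. [xs!k]) [0..<length xs]) = xs"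
    by (simp add: concat_map_singleton map_nth)
  have 4: "map (\<lambda>k. if k < length xs then [xs!k] else []) [length xs..<n] = map (\<lambda>k. []) [length xs..<n]"
    by (rule map_cong) auto
  have 5: "concat (map (\<lambda>k. []) ys) = []" for ys :: "nat list" by (induction ys) auto
  show ?thesis unfolding 1 map_append concat_append 2 3 4 5 by simp
qed

lemma projG_app: "projG G (xs @ ys) = projG G xs @ projG G ys"
  by (simp add: projG_def)

lemma projG_filled:
  assumes "\<forall>X. length (S X) \<le> B X"
  shows "projG (Gof S) (filled B u) = subst S u"
proof -
  have e: "\<And>X. concat (map (\<lambda>k. if k < length (S X) then [S X ! k] else []) [0..<B X]) = S X"
    using assms concat_take_aux by blast
  have v: "\<And>X. projG (Gof S) (fill B (Var X)) = S X"
  proof -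
    fix X
    have m: "map (\<lambda>x. case Gof S x of Some c \<Rightarrow> [c] | None \<Rightarrow> []) (map (FV X) [0..<B X])
       = map (\<lambda>k. if k < length (S X) then [S X ! k] else []) [0..<B X]"
      by (simp add: Gof_def)
    show "projG (Gof S) (fill B (Var X)) = S X" unfolding projG_def fill.simps(2) m by (rule e)
  qed
  have l: "\<And>a. projG (Gof S) (fill B (Let a)) = [a]" by (simp add: projG_def Gof_def)
  have f: "filled B (x # xs) = fill B x @ filled B xs" for x xs by (simp add: filled_def)
  have s: "subst S (x # xs) = (case x of Let a \<Rightarrow> [a] | Var X \<Rightarrow> S X) @ subst S xs" for x xs by (simp add: subst_def)
  show ?thesis
  proof (induction u)
    case Nil
    then show ?case by (simp add: filled_def subst_def projG_def)
  next
    case (Cons x xs)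
    then show ?case unfolding f s projG_app by (cases x) (simp_all only: v l sym.case)
  qed
qed

lemma completeness:
  assumes "subst S u = subst S v" "\<forall>X. length (S X) \<le> B X"
  shows "accepts u v B"
proof -
  have ag: "agr init_fsubst (Gof S)" by (auto simp: agr_def init_fsubst_def Gof_def split: fsym.splits)
  have GFC: "\<forall>c. Gof S (FC c) = c" by (simp add: Gof_def)
  have pr: "projG (Gof S) (drop 0 (filled B u)) = projG (Gof S) (drop 0 (filled B v))"
    using assms projG_filled[OF assms(2)] by simp
  have "\<exists>S'. (\<lambda>s s'. \<exists>a. eq_step (filled B u) (filled B v) s a s')\<^sup>*\<^sup>* ((0, 0), init_fsubst)
     ((length (filled B u), length (filled B v)), S')"
    using completeness_gen[OF GFC, of "(length (filled B u) - 0) + (length (filled B v) - 0)" "filled B u" "filled B v", rule_format, OF refl _ _ ag pr]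
    by simp
  then show ?thesis unfolding accepts_def .
qed

theorem mainTheorem1:
  fixes u v :: "('a::finite, 'v::finite) sym list" and B :: "'v \<Rightarrow> nat"
  shows "accepts u v B \<longleftrightarrow> (\<exists>S. subst S u = subst S v \<and> (\<forall>X. length (S X) \<le> B X))"
  using soundness completeness by blast

end
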